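(* Let $\mathbb{F}_{q^2}$ be a finite field of characteristic $p$ and let $n=p^\nu n'$ with $\nu\ge 0$ and $p\nmid n'$. Then the number of Hermitian complementary dual cyclic codes of length $n$ over $\mathbb{F}_{q^2}$ does not depend on $\nu$ and equals $2^{|\Omega_{q^2,n'}|+|\Lambda_{q^2,n'}|}$.
   Context: $\bar\alpha=\alpha^q$ for $\alpha\in\mathbb{F}_{q^2}$, and for $f(x)=\sum_i f_ix^i$, $\overline{f(x)}=\sum_i\bar f_ix^i$. For $f(x)$ with $f(0)\ne0$, $f^*(x)=x^{\deg f}f(0)^{-1}f(1/x)$ and $f^\dagger(x)=\overline{f^*(x)}$. A monic irreducible $f\in\mathbb{F}_{q^2}[x]$ with $f(0)\neq0$ is SCRIM if $f=f^\dagger$; otherwise $\{f,f^\dagger\}$ is a CRIM pair (two distinct monic irreducibles). $\Omega_{q^2,n'}$ is the set of SCRIM factors of $x^{n'}-1$ in $\mathbb{F}_{q^2}[x]$, and $\Lambda_{q^2,n'}$ is the set of unordered CRIM pairs $\{f,f^\dagger\}$ of monic irreducible factors of $x^{n'}-1$ in $\mathbb{F}_{q^2}[x]$. A cyclic code of length $n$ over $\mathbb{F}_{q^2}$ is a subspace of $\mathbb{F}_{q^2}^n$ invariant under cyclic shift. With Hermitian inner product $\langle \mathbf u,\mathbf v\rangle_{\mathrm H}=\sum_i u_i\bar v_i$ and $C^{\perp_{\mathrm H}}$ the corresponding dual, $C$ is Hermitian complementary dual if $C\cap C^{\perp_{\mathrm H}}=\{0\}$. *)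

theory Defs
  imports "HOL-Computational_Algebra.Polynomial" "HOL-Computational_Algebra.Primes"
begin

definition conjq :: "nat \<Rightarrow> 'a::field \<Rightarrow> 'a" where
  "conjq q a = a ^ q"

definition conj_poly :: "nat \<Rightarrow> 'a::field poly \<Rightarrow> 'a poly" where
  "conj_poly q f = map_poly (conjq q) f"

definition recip_poly :: "'a::field poly \<Rightarrow> 'a poly" where
  "recip_poly f = smult (inverse (coeff f 0)) (reflect_poly f)"

definition dagger_poly :: "nat \<Rightarrow> 'a::field poly \<Rightarrow> 'a poly" where
  "dagger_poly q f = conj_poly q (recip_poly f)"

definition mon_irr_factor :: "nat \<Rightarrow> 'a::field poly \<Rightarrow> bool" where
  "mon_irr_factor n f \<longleftrightarrow> lead_coeff f = 1 \<and> irreducible f \<and> coeff f 0 \<noteq> 0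
      \<and> f dvd (monom 1 n - 1)"

definition Omega :: "nat \<Rightarrow> nat \<Rightarrow> 'a::field poly set" where
  "Omega q n = {f. mon_irr_factor n f \<and> f = dagger_poly q f}"

definition Lambda :: "nat \<Rightarrow> nat \<Rightarrow> 'a::field poly set set" where
  "Lambda q n = {{f, dagger_poly q f} | f. mon_irr_factor n f \<and> mon_irr_factor n (dagger_poly q f)
                   \<and> f \<noteq> dagger_poly q f}"

(* Vectors of F^n are lists of length n *)
definition cyc_shift :: "'a list \<Rightarrow> 'a list" where
  "cyc_shift v = (if v = [] then [] else last v # butlast v)"

definition is_linear_code :: "nat \<Rightarrow> 'a::field list set \<Rightarrow> bool" where
  "is_linear_code n C \<longleftrightarrow> C \<subseteq> {v. length v = n} \<and> replicate n 0 \<in> C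
     \<and> (\<forall>u\<in>C. \<forall>v\<in>C. map2 (+) u v \<in> C) \<and> (\<forall>a. \<forall>u\<in>C. map ((*) a) u \<in> C)"

definition is_cyclic_code :: "nat \<Rightarrow> 'a::field list set \<Rightarrow> bool" where
  "is_cyclic_code n C \<longleftrightarrow> is_linear_code n C \<and> (\<forall>u\<in>C. cyc_shift u \<in> C)"

definition herm_ip :: "nat \<Rightarrow> 'a::field list \<Rightarrow> 'a list \<Rightarrow> 'a" where
  "herm_ip q u v = (\<Sum>i<length u. u ! i * conjq q (v ! i))"

definition herm_dual :: "nat \<Rightarrow> nat \<Rightarrow> 'a::field list set \<Rightarrow> 'a list set" where
  "herm_dual q n C = {v. length v = n \<and> (\<forall>u\<in>C. herm_ip q u v = 0)}"

definition is_HCD :: "nat \<Rightarrow> nat \<Rightarrow> 'a::field list set \<Rightarrow> bool" where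
  "is_HCD q n C \<longleftrightarrow> C \<inter> herm_dual q n C = {replicate n 0}"

end

theory Submission
  imports Defs
begin

locale frob =
  fixes q :: nat
  assumes q_pos: "q > 0"
    and add_pow: "\<And>a b :: 'a::{field,finite}. (a + b) ^ q = a ^ q + b ^ q"
    and invol: "\<And>a :: 'a. (a ^ q) ^ q = a"
begin

abbreviation sg :: "'a \<Rightarrow> 'a" where "sg \<equiv> conjq q"

lemma sg_add: "sg (a + b) = sg a + sg b" by (simp add: conjq_def add_pow)
lemma sg_mult: "sg (a * b) = sg a * sg b" by (simp add: conjq_def power_mult_distrib)
lemma sg_0[simp]: "sg 0 = 0" using q_pos by (simp add: conjq_def)
lemma sg_1[simp]: "sg 1 = 1" by (simp add: conjq_def)
lemma sg_sg[simp]: "sg (sg a) = a" by (simp add: conjq_def invol)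
lemma sg_inj[simp]: "sg a = sg b \<longleftrightarrow> a = b" by (metis sg_sg)
lemma sg_eq0[simp]: "sg a = 0 \<longleftrightarrow> a = 0" by (metis sg_0 sg_inj)
lemma sg_uminus: "sg (- a) = - sg a"
proof -
  have "sg (- a) + sg a = 0" by (metis sg_add sg_0 add.left_inverse)
  thus ?thesis by (simp add: eq_neg_iff_add_eq_0)
qed
lemma sg_minus: "sg (a - b) = sg a - sg b" by (metis diff_conv_add_uminus sg_add sg_uminus)
lemma sg_inverse: "sg (inverse a) = inverse (sg a)" by (simp add: conjq_def power_inverse)
lemma sg_sum: "sg (sum f A) = (\<Sum>i\<in>A. sg (f i))"
  by (induction A rule: infinite_finite_induct) (auto simp: sg_add)

definition rv :: "nat \<Rightarrow> 'a poly \<Rightarrow> 'a poly" where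
  "rv k p = (\<Sum>i\<le>k. monom (sg (coeff p i)) (k - i))"

lemma coeff_rv: "coeff (rv k p) j = (if j \<le> k then sg (coeff p (k - j)) else 0)"
proof -
  have "coeff (rv k p) j = (\<Sum>i\<le>k. if i = k - j \<and> j \<le> k then sg (coeff p i) else 0)"
    unfolding rv_def coeff_sum coeff_monom by (intro sum.cong) auto
  also have "\<dots> = (if j \<le> k then sg (coeff p (k - j)) else 0)"
    by (cases "j \<le> k") (simp_all add: sum.delta')
  finally show ?thesis .
qed

lemma rv_rv: "degree p \<le> k \<Longrightarrow> rv k (rv k p) = p"
  by (intro poly_eqI) (auto simp: coeff_rv coeff_eq_0)

lemma degree_rv_le: "degree (rv k p) \<le> k"
  by (rule degree_le) (auto simp: coeff_rv)

lemma rv_0[simp]: "rv k 0 = 0"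
  by (intro poly_eqI) (auto simp: coeff_rv)

lemma rv_smult: "rv k (smult c p) = smult (sg c) (rv k p)"
  by (intro poly_eqI) (auto simp: coeff_rv sg_mult)

lemma degree_map_sg[simp]: "degree (map_poly sg p) = degree p"
  by (cases "p = 0") (auto intro: map_poly_degree_eq)

lemma map_poly_sg_mult: "map_poly sg (a * b) = map_poly sg a * map_poly sg b"
  by (intro poly_eqI) (simp add: coeff_map_poly coeff_mult sg_sum sg_mult)

lemma rv_reflect: assumes "degree p \<le> k"
  shows "rv k p = monom 1 (k - degree p) * reflect_poly (map_poly sg p)"
proof (intro poly_eqI)
  fix j
  show "coeff (rv k p) j = coeff (monom 1 (k - degree p) * reflect_poly (map_poly sg p)) j"
    using assms
    by (auto simp: coeff_rv coeff_monom_mult coeff_reflect_poly coeff_map_poly coeff_eq_0)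
qed

lemma rv_mult:
  assumes "degree a \<le> k" "degree b \<le> l"
  shows "rv (k + l) (a * b) = rv k a * rv l b"
proof (cases "a = 0 \<or> b = 0")
  case True thus ?thesis by auto
next
  case False
  hence d: "degree (a * b) = degree a + degree b" by (simp add: degree_mult_eq)
  have "rv (k + l) (a * b) = monom 1 (k + l - degree (a*b)) * reflect_poly (map_poly sg (a * b))"
    by (rule rv_reflect) (use assms d in simp)
  also have "\<dots> = (monom 1 (k - degree a) * reflect_poly (map_poly sg a)) *
                  (monom 1 (l - degree b) * reflect_poly (map_poly sg b))"
    using assms by (simp add: d map_poly_sg_mult reflect_poly_mult mult_monom mult_ac)
  also have "\<dots> = rv k a * rv l b" using assms by (simp add: rv_reflect)
  finally show ?thesis .
qed

lemma rv_power:
  assumes "degree a \<le> d"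
  shows "rv (j * d) (a ^ j) = rv d a ^ j"
proof (induction j)
  case 0
  show ?case by (intro poly_eqI) (auto simp: coeff_rv coeff_1)
next
  case (Suc j)
  have "degree (a ^ j) \<le> j * d"
    using degree_power_le[of a j] assms
    by (metis dual_order.trans mult.commute mult_le_mono2)
  hence "rv (d + j * d) (a * a ^ j) = rv d a * rv (j * d) (a ^ j)"
    using assms by (intro rv_mult)
  thus ?case using Suc by simp
qed

lemma coeff_rv_top: "coeff (rv k p) k = sg (coeff p 0)" by (simp add: coeff_rv)
lemma coeff_rv_0: "coeff (rv k p) 0 = sg (coeff p k)" by (simp add: coeff_rv)

lemma degree_rv_eq: "coeff p 0 \<noteq> 0 \<Longrightarrow> degree (rv k p) = k"
  by (metis coeff_rv_top degree_rv_le le_antisym le_degree sg_eq0)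

lemma dagger_eq: "dagger_poly q f = smult (sg (inverse (coeff f 0))) (rv (degree f) f)"
  by (intro poly_eqI)
     (auto simp: dagger_poly_def conj_poly_def recip_poly_def coeff_map_poly coeff_rv
        coeff_reflect_poly sg_mult)

end

abbreviation XX :: "nat \<Rightarrow> 'a::field poly" where "XX n \<equiv> monom 1 n - 1"

definition code_of :: "nat \<Rightarrow> 'a::field poly \<Rightarrow> 'a list set" where
  "code_of n g = {v. length v = n \<and> g dvd Poly v}"

definition lp :: "nat \<Rightarrow> 'a::zero poly \<Rightarrow> 'a list" where
  "lp n w = map (coeff w) [0..<n]"

lemma degree_XX: "n > 0 \<Longrightarrow> degree (XX n :: 'a::field poly) = n"
proof -
  assume n: "n > 0"
  have "coeff (XX n :: 'a poly) n = 1" using n by (simp add: coeff_monom)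
  hence "n \<le> degree (XX n :: 'a poly)" by (metis le_degree one_neq_zero)
  moreover have "degree (XX n :: 'a poly) \<le> n"
    by (rule degree_le) (auto simp: coeff_monom)
  ultimately show ?thesis by simp
qed

lemma XX_nz: "n > 0 \<Longrightarrow> XX n \<noteq> (0 :: 'a::field poly)"
proof
  assume "n > 0" "XX n = (0 :: 'a::field poly)"
  thus False using degree_XX[of n, where ?'a='a] by simp
qed

lemma lead_XX: "n > 0 \<Longrightarrow> lead_coeff (XX n :: 'a::field poly) = 1"
proof -
  assume n: "n > 0"
  have "coeff (XX n :: 'a poly) n = 1" using n by (simp add: coeff_monom)
  thus ?thesis using degree_XX[OF n, where ?'a='a] by simp
qed

lemma length_lp[simp]: "length (lp n w) = n" by (simp add: lp_def)

lemma Poly_lp: "degree w < n \<Longrightarrow> Poly (lp n w) = w"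
  by (intro poly_eqI) (auto simp: lp_def nth_default_def coeff_eq_0)

lemma lp_Poly: "length v = n \<Longrightarrow> lp n (Poly v) = v"
  by (intro nth_equalityI) (auto simp: lp_def nth_default_def)

lemma degree_Poly_less: "length v = n \<Longrightarrow> n > 0 \<Longrightarrow> degree (Poly v) < n"
proof -
  assume "length v = n" "n > 0"
  hence "degree (Poly v) \<le> n - 1"
    by (intro degree_le) (auto simp: nth_default_def)
  thus ?thesis using \<open>n > 0\<close> by linarith
qed

lemma Poly_inj: "length u = length v \<Longrightarrow> Poly u = Poly v \<Longrightarrow> u = v"
  by (metis lp_Poly)

lemma Poly_map2: "length u = length v \<Longrightarrow> Poly (map2 (+) u v) = Poly u + Poly v"
  by (induction u v rule: list_induct2) auto

lemma Poly_smult_list: "Poly (map ((*) a) u) = smult a (Poly u)"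
  by (induction u) auto

lemma Poly_cyc:
  assumes "length v = n" "n > 0"
  shows "(XX n :: 'a::field poly) dvd ([:0,1:] * Poly v - Poly (cyc_shift v))"
proof -
  have "v \<noteq> []" using assms by auto
  then obtain bv l where v: "v = bv @ [l]" by (metis rev_exhaust)
  have lb: "length bv = n - 1" using assms v by simp
  have x: "[:0, 1:] = (monom 1 1 :: 'a poly)" by (simp add: monom_Suc)
  have e1: "Poly v = Poly bv + monom l (n - 1)"
    by (simp add: v Poly_append lb monom_altdef)
  have e2: "Poly (cyc_shift v) = [:l:] + [:0,1:] * Poly bv"
    apply (simp add: v cyc_shift_def)
    done
  have pc: "[:l:] + pCons 0 (Poly bv) = pCons l (Poly bv)" by simp
  have e3: "[:0,1:] * monom l (n - 1) = monom l n"
    using assms(2) by (simp add: x mult_monom)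
  have "[:0,1:] * Poly v - Poly (cyc_shift v) = smult l (XX n)"
    apply (simp only: e1 e2 distrib_left e3)
    apply (simp add: monom_altdef smult_diff_right)
    done
  thus ?thesis by (metis dvd_refl dvd_smult)
qed


lemma monic_dvd_antisym:
  assumes "lead_coeff (g :: 'a::field poly) = 1" "lead_coeff h = 1" "g dvd h" "h dvd g"
  shows "g = h"
proof -
  obtain k where k: "h = g * k" using assms(3) by (auto elim: dvdE)
  have nz: "g \<noteq> 0" "h \<noteq> 0" using assms by auto
  hence knz: "k \<noteq> 0" using k by auto
  have "degree h \<le> degree g" using assms(4) nz by (simp add: dvd_imp_degree_le)
  hence "degree k = 0" using k nz knz by (simp add: degree_mult_eq)
  then obtain c where c: "k = [:c:]" by (metis degree_eq_zeroE)
  have "lead_coeff h = lead_coeff g * c" using k c by (simp add: lead_coeff_mult)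
  hence "c = 1" using assms by simp
  thus ?thesis using k c by simp
qed

lemma mod_uniq:
  assumes "n > 0" "degree r < n" "(XX n :: 'a::field poly) dvd (b - r)"
  shows "b mod XX n = r"
proof -
  have "b mod XX n = r mod XX n" using assms(3) by (simp add: mod_eq_dvd_iff)
  also have "\<dots> = r" using assms by (intro mod_poly_less) (simp add: degree_XX)
  finally show ?thesis .
qed

lemma mod_XX_eq: "n > 0 \<Longrightarrow> degree r < n \<Longrightarrow> r mod (XX n :: 'a::field poly) = r"
  by (intro mod_poly_less) (simp add: degree_XX)

lemma code_cyclic:
  assumes n: "n > 0" and g: "g dvd (XX n :: 'a::field poly)"
  shows "is_cyclic_code n (code_of n g)"
  unfolding is_cyclic_code_def is_linear_code_def
proof (intro conjI ballI allI)
  show "code_of n g \<subseteq> {v. length v = n}" by (auto simp: code_of_def)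
  show "replicate n 0 \<in> code_of n g" by (simp add: code_of_def)
  fix u v assume u: "u \<in> code_of n g" and v: "v \<in> code_of n g"
  thus "map2 (+) u v \<in> code_of n g"
    by (auto simp: code_of_def Poly_map2)
next
  fix a u assume "u \<in> code_of n g"
  thus "map ((*) a) u \<in> code_of n g"
    by (auto simp: code_of_def Poly_smult_list dvd_smult)
next
  fix u assume u: "u \<in> code_of n g"
  hence lu: "length u = n" and gu: "g dvd Poly u" by (auto simp: code_of_def)
  have "g dvd [:0,1:] * Poly u - ([:0,1:] * Poly u - Poly (cyc_shift u))"
    using gu g Poly_cyc[OF lu n] by (meson dvd_diff dvd_mult dvd_trans)
  hence "g dvd Poly (cyc_shift u)" by simp
  moreover have "length (cyc_shift u) = n" using lu by (auto simp: cyc_shift_def)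
  ultimately show "cyc_shift u \<in> code_of n g" by (simp add: code_of_def)
qed

lemma code_of_X: "n > 0 \<Longrightarrow> code_of n (XX n :: 'a::field poly) = {replicate n 0}"
proof safe
  fix v assume n: "n > 0" and v: "v \<in> code_of n (XX n :: 'a poly)"
  hence lv: "length v = n" and d: "XX n dvd Poly v" by (auto simp: code_of_def)
  have "Poly v = 0"
  proof (rule ccontr)
    assume "Poly v \<noteq> 0"
    hence "degree (XX n :: 'a poly) \<le> degree (Poly v)" using d dvd_imp_degree_le by blast
    thus False using degree_Poly_less[OF lv n] degree_XX[OF n, where ?'a='a] by simp
  qed
  thus "v = replicate n 0" using lv by (intro Poly_inj) auto
qed (auto simp: code_of_def)

lemma cyclic_code_gen:
  assumes n: "n > 0" and C: "is_cyclic_code n (C :: 'a::field list set)"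
  shows "\<exists>g. lead_coeff g = 1 \<and> g dvd XX n \<and> C = code_of n g"
proof -
  define X where "X = (XX n :: 'a poly)"
  have dX: "degree X = n" using degree_XX[OF n] by (simp add: X_def)
  have len: "\<And>v. v \<in> C \<Longrightarrow> length v = n" using C by (auto simp: is_cyclic_code_def is_linear_code_def)
  define W where "W = Poly ` C"
  have Wdeg: "\<And>w. w \<in> W \<Longrightarrow> degree w < n" using len degree_Poly_less n by (auto simp: W_def)
  have W0: "0 \<in> W"
  proof -
    have "replicate n 0 \<in> C" using C by (auto simp: is_cyclic_code_def is_linear_code_def)
    thus ?thesis unfolding W_def by (metis Poly_replicate_0 image_eqI)
  qed
  have Wadd: "\<And>a b. a \<in> W \<Longrightarrow> b \<in> W \<Longrightarrow> a + b \<in> W"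
  proof -
    fix a b assume "a \<in> W" "b \<in> W"
    then obtain u v where uv: "u \<in> C" "v \<in> C" "a = Poly u" "b = Poly v" by (auto simp: W_def)
    hence "map2 (+) u v \<in> C" using C by (auto simp: is_cyclic_code_def is_linear_code_def)
    moreover have "Poly (map2 (+) u v) = a + b" using uv len by (simp add: Poly_map2)
    ultimately show "a + b \<in> W" unfolding W_def by (metis image_eqI)
  qed
  have Wsm: "\<And>c a. a \<in> W \<Longrightarrow> smult c a \<in> W"
  proof -
    fix c a assume "a \<in> W"
    then obtain u where u: "u \<in> C" "a = Poly u" by (auto simp: W_def)
    hence "map ((*) c) u \<in> C" using C by (auto simp: is_cyclic_code_def is_linear_code_def)
    thus "smult c a \<in> W" unfolding W_def using u by (metis Poly_smult_list image_eqI)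
  qed
  have Wdiff: "\<And>a b. a \<in> W \<Longrightarrow> b \<in> W \<Longrightarrow> a - b \<in> W"
    using Wadd Wsm by (metis add_uminus_conv_diff smult_1_left smult_minus_left)
  have Wx: "\<And>a. a \<in> W \<Longrightarrow> ([:0,1:] * a) mod X \<in> W"
  proof -
    fix a assume "a \<in> W"
    then obtain u where u: "u \<in> C" "a = Poly u" by (auto simp: W_def)
    hence cu: "cyc_shift u \<in> C" using C by (auto simp: is_cyclic_code_def)
    have lc: "length (cyc_shift u) = n" using len[OF u(1)] by (auto simp: cyc_shift_def)
    have dv: "XX n dvd [:0,1:] * a - Poly (cyc_shift u)"
      using Poly_cyc[OF len[OF u(1)] n] u by simp
    have "([:0,1:] * a) mod X = Poly (cyc_shift u)"
      unfolding X_def using mod_uniq[OF n degree_Poly_less[OF lc n] dv] .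
    thus "([:0,1:] * a) mod X \<in> W" using cu by (simp add: W_def)
  qed
  have Wmul: "\<And>a b. a \<in> W \<Longrightarrow> (b * a) mod X \<in> W"
  proof -
    fix a b assume a: "a \<in> W"
    show "(b * a) mod X \<in> W"
    proof (induction b)
      case 0
      thus ?case using W0 by simp
    next
      case (pCons c b)
      have "(pCons c b * a) mod X = (smult c a + [:0,1:] * (b * a)) mod X"
        by simp
      also have "\<dots> = (smult c a mod X + ([:0,1:] * ((b * a) mod X)) mod X) mod X"
        by (metis mod_add_eq mod_mult_right_eq)
      also have "\<dots> = smult c a + ([:0,1:] * ((b * a) mod X)) mod X"
        using Wdeg[OF Wsm[OF a]] Wdeg[OF Wx[OF pCons.IH]] n
        unfolding X_def by (simp add: mod_XX_eq degree_add_less)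
      finally show ?case using Wadd Wsm a Wx pCons.IH by simp
    qed
  qed
  show ?thesis
  proof (cases "W \<subseteq> {0}")
    case True
    have "C = code_of n X"
    proof safe
      fix v assume v: "v \<in> C"
      hence "Poly v = 0" using True by (auto simp: W_def)
      thus "v \<in> code_of n X" using len[OF v] by (simp add: code_of_def)
    next
      fix v assume "v \<in> code_of n X"
      hence "v = replicate n 0" using code_of_X[OF n] by (auto simp: X_def)
      thus "v \<in> C" using C by (auto simp: is_cyclic_code_def is_linear_code_def)
    qed
    moreover have "lead_coeff X = 1" using lead_XX[OF n, where ?'a='a] by (simp only: X_def)
    moreover have "X dvd XX n" by (simp only: X_def dvd_refl)
    ultimately show ?thesis by blast
  next
    case False
    then obtain w0 where "w0 \<in> W" "w0 \<noteq> 0" by auto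
    then obtain g0 where g0: "g0 \<in> W" "g0 \<noteq> 0" and g0min: "\<And>y. y \<in> W \<Longrightarrow> y \<noteq> 0 \<Longrightarrow> degree g0 \<le> degree y"
      using ex_has_least_nat[of "\<lambda>y. y \<in> W \<and> y \<noteq> 0" w0 degree] by blast
    define g where "g = smult (inverse (lead_coeff g0)) g0"
    have gW: "g \<in> W" using g0 Wsm by (simp add: g_def)
    have lg: "lead_coeff g = 1" using g0 by (simp add: g_def)
    have gnz: "g \<noteq> 0" using g0 by (simp add: g_def)
    have dg: "degree g = degree g0" by (simp add: g_def)
    have gmin: "\<And>y. y \<in> W \<Longrightarrow> y \<noteq> 0 \<Longrightarrow> degree g \<le> degree y" using g0min dg by simp
    have dgn: "degree g < n" using Wdeg[OF gW] .
    have W_iff: "\<And>w. w \<in> W \<longleftrightarrow> degree w < n \<and> g dvd w"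
    proof
      fix w assume w: "w \<in> W"
      define r where "r = w mod g"
      have qr: "w div g * g + r = w" by (simp add: r_def)
      have dr: "r = 0 \<or> degree r < degree g" using degree_mod_less[OF gnz] by (simp add: r_def)
      have "degree (w div g * g) < n"
      proof -
        have "w div g * g = w - r" using qr by (simp add: algebra_simps)
        moreover have "degree r < n" using dr dgn n by auto
        ultimately show ?thesis using Wdeg[OF w] by (simp add: degree_diff_less)
      qed
      hence "(w div g * g) mod X = w div g * g" unfolding X_def using n by (simp add: mod_XX_eq)
      hence "w div g * g \<in> W" using Wmul[OF gW, of "w div g"] by simp
      moreover have "r = w - w div g * g" using qr by (simp add: algebra_simps)
      ultimately have rW: "r \<in> W" using Wdiff[OF w] by simp
      have "r = 0"
      proof (rule ccontr)
        assume "r \<noteq> 0"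
        thus False using gmin[OF rW] dr by simp
      qed
      thus "degree w < n \<and> g dvd w" using Wdeg[OF w] by (simp add: r_def mod_eq_0_iff_dvd)
    next
      fix w assume w: "degree w < n \<and> g dvd w"
      then obtain k where k: "w = g * k" by (auto elim: dvdE)
      have "(k * g) mod X \<in> W" using Wmul[OF gW] .
      moreover have "(k * g) mod X = w" using w k n unfolding X_def by (simp add: mod_XX_eq mult.commute)
      ultimately show "w \<in> W" by simp
    qed
    have gX: "g dvd X"
    proof -
      define r where "r = X mod g"
      have dr: "r = 0 \<or> degree r < degree g" using degree_mod_less[OF gnz] by (simp add: r_def)
      have A: "(- (X div g) * g) mod X \<in> W" using Wmul[OF gW] .
      have B: "- (X div g) * g = r - X" by (simp add: r_def algebra_simps)
      have A': "(r - X) mod X \<in> W" using A by (simp only: B)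
      moreover have "(r - X) mod X = r"
      proof -
        have "(r - X) mod X = r mod X" by (simp add: mod_eq_dvd_iff)
        also have "\<dots> = r"
        proof -
          have "degree r < n" using dr dgn n by auto
          thus ?thesis unfolding X_def using n by (simp add: mod_XX_eq)
        qed
        finally show ?thesis .
      qed
      ultimately have rW: "r \<in> W" using A' by (simp only:)
      have "r = 0"
      proof (rule ccontr)
        assume "r \<noteq> 0"
        thus False using gmin[OF rW] dr by simp
      qed
      thus ?thesis by (simp add: r_def mod_eq_0_iff_dvd)
    qed
    have "C = code_of n g"
    proof safe
      fix v assume v: "v \<in> C"
      hence "Poly v \<in> W" by (simp add: W_def)
      thus "v \<in> code_of n g" using W_iff len[OF v] by (simp add: code_of_def)
    next
      fix v assume v: "v \<in> code_of n g"
      hence lv: "length v = n" and "g dvd Poly v" by (auto simp: code_of_def)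
      hence "Poly v \<in> W" using W_iff degree_Poly_less[OF lv n] by simp
      then obtain u where u: "u \<in> C" "Poly u = Poly v" by (auto simp: W_def)
      thus "v \<in> C" using Poly_inj[of u v] len[OF u(1)] lv by simp
    qed
    thus ?thesis using lg gX by (auto simp: X_def)
  qed
qed

lemma code_of_inj_aux:
  assumes n: "n > 0" and g: "lead_coeff g = 1" "g dvd (XX n :: 'a::field poly)"
    and h: "h dvd XX n" and eq: "code_of n g = code_of n h"
  shows "h dvd g"
proof (cases "degree g < n")
  case True
  have "lp n g \<in> code_of n g" using True by (simp add: code_of_def Poly_lp)
  hence "lp n g \<in> code_of n h" using eq by simp
  thus ?thesis using True by (simp add: code_of_def Poly_lp)
next
  case False
  have gnz: "g \<noteq> 0" using g by auto
  obtain k where k: "XX n = g * k" using g by (auto elim: dvdE)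
  have knz: "k \<noteq> 0" using k XX_nz[OF n, where ?'a='a] by auto
  have "degree (XX n :: 'a poly) = degree g + degree k" using k gnz knz by (simp add: degree_mult_eq)
  hence "degree k = 0" using False degree_XX[OF n, where ?'a='a] by simp
  then obtain c where c: "k = [:c:]" "c \<noteq> 0" using knz by (metis degree_eq_zeroE pCons_0_0)
  have "h dvd g * [:c:]" using h k c by simp
  thus ?thesis using c by (simp add: dvd_smult_cancel)
qed

lemma code_of_inj:
  assumes n: "n > 0" and g: "lead_coeff g = 1" "g dvd (XX n :: 'a::field poly)"
    and h: "lead_coeff h = 1" "h dvd XX n" and eq: "code_of n g = code_of n h"
  shows "g = h"
proof -
  have "h dvd g" using code_of_inj_aux[OF n g h(2) eq] .
  moreover have "g dvd h" using code_of_inj_aux[OF n h g(2) eq[symmetric]] .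
  ultimately show ?thesis using g h by (intro monic_dvd_antisym) auto
qed


lemma coeff_XX_mult_mid:
  assumes n: "n > 0" and d: "degree ((XX n :: 'a::field poly) * t) \<le> 2 * n - 2"
  shows "coeff (XX n * t) (n - 1) = 0"
proof (cases "t = 0")
  case False
  have "degree (XX n * t) = n + degree t"
    using False XX_nz[OF n, where ?'a='a] degree_XX[OF n, where ?'a='a] by (simp add: degree_mult_eq)
  hence dt: "degree t < n - 1" using d n by simp
  have "XX n * t = monom 1 n * t - t" by (simp add: algebra_simps)
  moreover have "coeff (monom 1 n * t) (n - 1) = 0" using n by (simp add: coeff_monom_mult)
  moreover have "coeff t (n - 1) = 0" using dt by (simp add: coeff_eq_0)
  ultimately show ?thesis by simp
qed simp

lemma coeff_mod_mid:
  assumes n: "n > 0" and d: "degree (W :: 'a::field poly) \<le> 2 * n - 2"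
  shows "coeff (W mod XX n) (n - 1) = coeff W (n - 1)"
proof -
  define t where "t = W div XX n"
  define r where "r = W mod XX n"
  have W: "W = XX n * t + r" by (simp add: t_def r_def)
  have dr: "degree r < n"
    using degree_mod_less[OF XX_nz[OF n], of W] degree_XX[OF n, where ?'a='a] n
    by (auto simp: r_def)
  have "degree (XX n * t) \<le> 2 * n - 2"
  proof -
    have "XX n * t = W - r" using W by simp
    moreover have "degree (W - r) \<le> 2 * n - 2"
      using degree_diff_le_max[of W r] d dr n by linarith
    ultimately show ?thesis by simp
  qed
  hence "coeff (XX n * t) (n - 1) = 0" by (rule coeff_XX_mult_mid[OF n])
  hence "coeff (XX n * t + r) (n - 1) = coeff r (n - 1)" by simp
  hence "coeff W (n - 1) = coeff r (n - 1)" using W by simp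
  thus ?thesis by (simp add: r_def)
qed

context frob
begin

lemma herm_poly:
  assumes "length u = n" "length v = n" "n > 0"
  shows "herm_ip q u v = coeff (Poly u * rv (n - 1) (Poly v)) (n - 1)"
proof -
  have "coeff (Poly u * rv (n - 1) (Poly v)) (n - 1) =
        (\<Sum>i\<le>n - 1. coeff (Poly u) i * coeff (rv (n - 1) (Poly v)) (n - 1 - i))"
    by (simp add: coeff_mult)
  also have "\<dots> = (\<Sum>i<n. u ! i * sg (v ! i))"
  proof -
    have e: "{..n - 1} = {..<n}"
    proof -
      from assms(3) obtain m where "n = Suc m" by (cases n) auto
      thus ?thesis by (simp add: lessThan_Suc_atMost)
    qed
    show ?thesis unfolding e using assms
      by (intro sum.cong) (auto simp: coeff_rv nth_default_def)
  qed
  also have "\<dots> = herm_ip q u v" using assms by (simp add: herm_ip_def)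
  finally show ?thesis by simp
qed

lemma dual_iff:
  assumes n: "n > 0" and g: "g dvd (XX n :: 'a poly)"
  shows "v \<in> herm_dual q n (code_of n g) \<longleftrightarrow>
         length v = n \<and> XX n dvd g * rv (n - 1) (Poly v)"
proof -
  define X where "X = (XX n :: 'a poly)"
  define V where "V = rv (n - 1) (Poly v)"
  have dV: "degree V \<le> n - 1" by (simp add: V_def degree_rv_le)
  have "v \<in> herm_dual q n (code_of n g) \<longleftrightarrow>
        length v = n \<and> (\<forall>w. degree w < n \<and> g dvd w \<longrightarrow> coeff (w * V) (n - 1) = 0)"
  proof -
    have "(\<forall>u\<in>code_of n g. herm_ip q u v = 0) \<longleftrightarrow>
          (\<forall>w. degree w < n \<and> g dvd w \<longrightarrow> coeff (w * V) (n - 1) = 0)" if lv: "length v = n"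
    proof
      assume H: "\<forall>u\<in>code_of n g. herm_ip q u v = 0"
      show "\<forall>w. degree w < n \<and> g dvd w \<longrightarrow> coeff (w * V) (n - 1) = 0"
      proof (intro allI impI)
        fix w assume w: "degree w < n \<and> g dvd w"
        hence "lp n w \<in> code_of n g" by (simp add: code_of_def Poly_lp)
        hence "herm_ip q (lp n w) v = 0" using H by blast
        thus "coeff (w * V) (n - 1) = 0" using herm_poly[where u="lp n w" and v=v] lv n w
          by (simp add: Poly_lp V_def)
      qed
    next
      assume H: "\<forall>w. degree w < n \<and> g dvd w \<longrightarrow> coeff (w * V) (n - 1) = 0"
      show "\<forall>u\<in>code_of n g. herm_ip q u v = 0"
      proof
        fix u assume "u \<in> code_of n g"
        hence lu: "length u = n" and gu: "g dvd Poly u" by (auto simp: code_of_def)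
        have "coeff (Poly u * V) (n - 1) = 0" using H degree_Poly_less[OF lu n] gu by blast
        thus "herm_ip q u v = 0" using herm_poly[OF lu lv n] by (simp add: V_def)
      qed
    qed
    thus ?thesis unfolding herm_dual_def by auto
  qed
  also have "\<dots> \<longleftrightarrow> length v = n \<and> X dvd g * V"
  proof (intro conj_cong refl iffI)
    assume H: "\<forall>w. degree w < n \<and> g dvd w \<longrightarrow> coeff (w * V) (n - 1) = 0"
    define Z where "Z = (g * V) mod X"
    have dZ: "degree Z < n"
      using degree_mod_less[OF XX_nz[OF n], of "g * V"] degree_XX[OF n, where ?'a='a] n
      by (auto simp: Z_def X_def)
    have "coeff Z i = 0" for i
    proof (cases "i < n")
      case False thus ?thesis using dZ by (simp add: coeff_eq_0)
    next
      case True
      define j where "j = n - 1 - i"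
      have jn: "j \<le> n - 1" and ij: "i = n - 1 - j" using True by (auto simp: j_def)
      define w where "w = (monom 1 j * g) mod X"
      have dw: "degree w < n"
        using degree_mod_less[OF XX_nz[OF n], of "monom 1 j * g"] degree_XX[OF n, where ?'a='a] n
        by (auto simp: w_def X_def)
      have gw: "g dvd w"
      proof -
        have "g dvd monom 1 j * g" by simp
        thus ?thesis using g unfolding w_def X_def by (simp add: dvd_mod)
      qed
      have c0: "coeff (w * V) (n - 1) = 0" using H dw gw by blast
      have d1: "degree (w * V) \<le> 2 * n - 2"
        using degree_mult_le[of w V] dw dV by linarith
      have "(w * V) mod X = (monom 1 j * Z) mod X"
        unfolding w_def Z_def by (metis mod_mult_left_eq mod_mult_right_eq mult.assoc)
      hence "coeff (w * V) (n - 1) = coeff ((monom 1 j * Z) mod X) (n - 1)"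
        using coeff_mod_mid[OF n d1] by (simp add: X_def)
      also have "\<dots> = coeff (monom 1 j * Z) (n - 1)"
      proof -
        have "degree (monom 1 j * Z) \<le> j + degree Z"
          by (metis degree_monom_le degree_mult_le add_le_mono1 order_trans)
        hence "degree (monom 1 j * Z) \<le> 2 * n - 2" using jn dZ by linarith
        thus ?thesis using coeff_mod_mid[OF n] by (simp add: X_def)
      qed
      also have "\<dots> = coeff Z i" using jn ij n by (simp add: coeff_monom_mult)
      finally show ?thesis using c0 by simp
    qed
    hence "Z = 0" by (simp add: poly_eq_iff)
    thus "X dvd g * V" by (simp add: Z_def mod_eq_0_iff_dvd)
  next
    assume H: "X dvd g * V"
    show "\<forall>w. degree w < n \<and> g dvd w \<longrightarrow> coeff (w * V) (n - 1) = 0"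
    proof (intro allI impI)
      fix w assume w: "degree w < n \<and> g dvd w"
      then obtain k where k: "w = g * k" by (auto elim: dvdE)
      have "w * V = (g * V) * k" using k by (simp add: algebra_simps)
      hence "X dvd w * V" using dvd_mult2[OF H, of k] by (simp only:)
      hence "(w * V) mod X = 0" by (simp add: mod_eq_0_iff_dvd)
      moreover have "degree (w * V) \<le> 2 * n - 2"
        using degree_mult_le[of w V] w dV by linarith
      ultimately show "coeff (w * V) (n - 1) = 0"
        using coeff_mod_mid[OF n] by (metis X_def coeff_0)
    qed
  qed
  finally show ?thesis by (simp add: X_def V_def)
qed


lemma rv_dvd_iff:
  assumes dw: "degree w \<le> k" and h0: "coeff h 0 \<noteq> 0"
  shows "h dvd rv k w \<longleftrightarrow> rv (degree h) h dvd w"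
proof (cases "degree h \<le> k")
  case True
  have hnz: "h \<noteq> 0" using h0 by auto
  have dH: "degree (rv (degree h) h) = degree h" using h0 by (rule degree_rv_eq)
  show ?thesis
  proof
    assume "h dvd rv k w"
    then obtain c where c: "rv k w = h * c" by (auto elim: dvdE)
    show "rv (degree h) h dvd w"
    proof (cases "c = 0")
      case True
      hence "w = 0" using c rv_rv[OF dw] by (metis mult_zero_right rv_0)
      thus ?thesis by simp
    next
      case False
      have "degree (h * c) \<le> k" using c degree_rv_le by metis
      hence dc: "degree c \<le> k - degree h" using False hnz by (simp add: degree_mult_eq)
      have "w = rv k (h * c)" using c rv_rv[OF dw] by simp
      also have "\<dots> = rv (degree h + (k - degree h)) (h * c)" using True by simp
      also have "\<dots> = rv (degree h) h * rv (k - degree h) c" using dc by (intro rv_mult) auto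
      finally show ?thesis by simp
    qed
  next
    assume "rv (degree h) h dvd w"
    then obtain c where c: "w = rv (degree h) h * c" by (auto elim: dvdE)
    show "h dvd rv k w"
    proof (cases "c = 0")
      case True thus ?thesis using c by simp
    next
      case False
      have Hnz: "rv (degree h) h \<noteq> 0" using dH hnz True
        by (metis coeff_rv_top h0 leading_coeff_0_iff sg_eq0)
      have "degree w = degree h + degree c" using c False Hnz dH by (simp add: degree_mult_eq)
      hence dc: "degree c \<le> k - degree h" using dw by simp
      have "rv k w = rv (degree h + (k - degree h)) (rv (degree h) h * c)" using True c by simp
      also have "\<dots> = rv (degree h) (rv (degree h) h) * rv (k - degree h) c"
        using dc dH by (intro rv_mult) auto
      also have "\<dots> = h * rv (k - degree h) c" by (simp add: rv_rv)
      finally show ?thesis by simp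
    qed
  qed
next
  case False
  have dH: "degree (rv (degree h) h) = degree h" using h0 by (rule degree_rv_eq)
  show ?thesis
  proof
    assume "h dvd rv k w"
    hence "rv k w = 0" using False degree_rv_le[of k w] dvd_imp_degree_le[of h "rv k w"] by fastforce
    hence "w = 0" using rv_rv[OF dw] by (metis rv_0)
    thus "rv (degree h) h dvd w" by simp
  next
    assume a: "rv (degree h) h dvd w"
    have "w = 0"
    proof (rule ccontr)
      assume "w \<noteq> 0"
      hence "degree (rv (degree h) h) \<le> degree w" using a dvd_imp_degree_le by blast
      thus False using dH dw False by simp
    qed
    thus "h dvd rv k w" by simp
  qed
qed

lemma coeff_XX_0: "n > 0 \<Longrightarrow> coeff (XX n :: 'a poly) 0 = -1"
  by (simp add: coeff_monom)

lemma hcd_iff: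
  assumes n: "n > 0" and g: "g dvd (XX n :: 'a poly)"
  defines "h \<equiv> XX n div g"
  shows "is_HCD q n (code_of n g) \<longleftrightarrow>
         \<not> (\<exists>w. w \<noteq> 0 \<and> degree w < n \<and> g dvd w \<and> rv (degree h) h dvd w)"
proof -
  have X: "XX n = g * h" using g by (simp add: h_def)
  have gnz: "g \<noteq> 0" using X XX_nz[OF n, where ?'a='a] by auto
  have h0: "coeff h 0 \<noteq> 0"
  proof
    assume "coeff h 0 = 0"
    hence "coeff (g * h) 0 = 0" by (simp add: coeff_mult)
    thus False using X coeff_XX_0[OF n] by simp
  qed
  have mem: "v \<in> code_of n g \<inter> herm_dual q n (code_of n g) \<longleftrightarrow>
        length v = n \<and> g dvd Poly v \<and> rv (degree h) h dvd Poly v" for v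
  proof -
    have "v \<in> code_of n g \<inter> herm_dual q n (code_of n g) \<longleftrightarrow>
          length v = n \<and> g dvd Poly v \<and> g * h dvd g * rv (n - 1) (Poly v)"
      using dual_iff[OF n g, of v] X by (auto simp: code_of_def)
    also have "\<dots> \<longleftrightarrow> length v = n \<and> g dvd Poly v \<and> h dvd rv (n - 1) (Poly v)"
      using gnz by simp
    also have "\<dots> \<longleftrightarrow> length v = n \<and> g dvd Poly v \<and> rv (degree h) h dvd Poly v"
    proof (intro conj_cong refl)
      assume "length v = n"
      hence "degree (Poly v) \<le> n - 1" using degree_Poly_less[of v n] n by simp
      thus "h dvd rv (n - 1) (Poly v) \<longleftrightarrow> rv (degree h) h dvd Poly v"
        using rv_dvd_iff h0 by blast
    qed
    finally show ?thesis .
  qed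
  have z: "replicate n 0 \<in> code_of n g \<inter> herm_dual q n (code_of n g)"
    using mem by simp
  show ?thesis
  proof
    assume H: "is_HCD q n (code_of n g)"
    show "\<not> (\<exists>w. w \<noteq> 0 \<and> degree w < n \<and> g dvd w \<and> rv (degree h) h dvd w)"
    proof
      assume "\<exists>w. w \<noteq> 0 \<and> degree w < n \<and> g dvd w \<and> rv (degree h) h dvd w"
      then obtain w where w: "w \<noteq> 0" "degree w < n" "g dvd w" "rv (degree h) h dvd w" by blast
      have "lp n w \<in> code_of n g \<inter> herm_dual q n (code_of n g)"
        using mem w by (simp add: Poly_lp)
      hence "lp n w = replicate n 0" using H by (auto simp: is_HCD_def)
      hence "Poly (lp n w) = 0" by simp
      thus False using w by (simp add: Poly_lp)
    qed
  next
    assume H: "\<not> (\<exists>w. w \<noteq> 0 \<and> degree w < n \<and> g dvd w \<and> rv (degree h) h dvd w)"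
    have "code_of n g \<inter> herm_dual q n (code_of n g) \<subseteq> {replicate n 0}"
    proof
      fix v assume "v \<in> code_of n g \<inter> herm_dual q n (code_of n g)"
      hence v: "length v = n" "g dvd Poly v" "rv (degree h) h dvd Poly v" using mem by auto
      hence "Poly v = 0" using H degree_Poly_less[OF v(1) n] by blast
      hence "v = replicate n 0" using v(1) by (intro Poly_inj) auto
      thus "v \<in> {replicate n 0}" by simp
    qed
    thus "is_HCD q n (code_of n g)" using z by (auto simp: is_HCD_def)
  qed
qed

end

lemma orbit_count:
  fixes S :: "'b set" and d :: "'b \<Rightarrow> 'b"
  assumes fin: "finite S" and dS: "\<And>f. f \<in> S \<Longrightarrow> d f \<in> S" and dd: "\<And>f. f \<in> S \<Longrightarrow> d (d f) = f"
  shows "card {T. T \<subseteq> S \<and> (\<forall>f\<in>T. d f \<in> T)} =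
         2 ^ (card {f. f \<in> S \<and> f = d f} + card {{f, d f} | f. f \<in> S \<and> d f \<in> S \<and> f \<noteq> d f})"
proof -
  define Orb where "Orb = (\<lambda>f. {f, d f}) ` S"
  define Om where "Om = {f. f \<in> S \<and> f = d f}"
  define La where "La = {{f, d f} | f. f \<in> S \<and> d f \<in> S \<and> f \<noteq> d f}"
  define TT where "TT = {T. T \<subseteq> S \<and> (\<forall>f\<in>T. d f \<in> T)}"
  have finOrb: "finite Orb" using fin by (simp add: Orb_def)
  have OrbU: "Orb = (\<lambda>f. {f}) ` Om \<union> La"
  proof (rule set_eqI, rule iffI)
    fix x assume "x \<in> Orb"
    then obtain f where f: "f \<in> S" "x = {f, d f}" by (auto simp: Orb_def)
    show "x \<in> (\<lambda>f. {f}) ` Om \<union> La"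
    proof (cases "f = d f")
      case True
      hence "x = {f}" using f by simp
      moreover have "f \<in> Om" using True f by (simp add: Om_def)
      ultimately show ?thesis by blast
    next
      case False
      hence "x \<in> La" using f dS unfolding La_def by blast
      thus ?thesis by blast
    qed
  next
    fix x assume "x \<in> (\<lambda>f. {f}) ` Om \<union> La"
    thus "x \<in> Orb"
    proof
      assume "x \<in> (\<lambda>f. {f}) ` Om"
      then obtain f where f: "f \<in> S" "f = d f" "x = {f}" by (auto simp: Om_def)
      hence "x = {f, d f}" by simp
      thus "x \<in> Orb" using f(1) by (simp add: Orb_def)
    next
      assume "x \<in> La"
      then obtain f where f: "f \<in> S" "x = {f, d f}" by (auto simp: La_def)
      thus "x \<in> Orb" by (simp add: Orb_def)
    qed
  qed
  have disj: "(\<lambda>f. {f}) ` Om \<inter> La = {}"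
  proof (rule ccontr)
    assume "(\<lambda>f. {f}) ` Om \<inter> La \<noteq> {}"
    then obtain f g where "{f} = {g, d g}" "g \<noteq> d g" by (auto simp: La_def)
    hence "g \<in> {f}" "d g \<in> {f}" "g \<noteq> d g" by auto
    thus False by simp
  qed
  have finOm: "finite Om" using fin by (simp add: Om_def)
  have finLa: "finite La" using finOrb OrbU by simp
  have cOrb: "card Orb = card Om + card La"
    unfolding OrbU using card_Un_disjoint[OF _ finLa disj] finOm
    by (simp add: card_image)
  have orb: "\<And>x. x \<in> Orb \<Longrightarrow> x \<subseteq> S" using dS by (auto simp: Orb_def)
  have bij: "bij_betw (\<lambda>T. {x\<in>Orb. x \<subseteq> T}) TT (Pow Orb)"
  proof (rule bij_betw_byWitness[where f' = Union])
    show "\<forall>T\<in>TT. \<Union>{x\<in>Orb. x \<subseteq> T} = T"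
    proof
      fix T assume T: "T \<in> TT"
      show "\<Union>{x\<in>Orb. x \<subseteq> T} = T"
      proof
        show "\<Union>{x\<in>Orb. x \<subseteq> T} \<subseteq> T" by auto
        show "T \<subseteq> \<Union>{x\<in>Orb. x \<subseteq> T}"
        proof
          fix f assume "f \<in> T"
          hence "f \<in> S" "d f \<in> T" using T by (auto simp: TT_def)
          hence "{f, d f} \<in> {x\<in>Orb. x \<subseteq> T}" using \<open>f \<in> T\<close> by (auto simp: Orb_def)
          thus "f \<in> \<Union>{x\<in>Orb. x \<subseteq> T}" by blast
        qed
      qed
    qed
    show "\<forall>U\<in>Pow Orb. {x\<in>Orb. x \<subseteq> \<Union>U} = U"
    proof
      fix U assume U: "U \<in> Pow Orb"
      show "{x\<in>Orb. x \<subseteq> \<Union>U} = U"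
      proof
        show "U \<subseteq> {x\<in>Orb. x \<subseteq> \<Union>U}" using U by auto
        show "{x\<in>Orb. x \<subseteq> \<Union>U} \<subseteq> U"
        proof
          fix x assume x: "x \<in> {x\<in>Orb. x \<subseteq> \<Union>U}"
          then obtain f where f: "f \<in> S" "x = {f, d f}" by (auto simp: Orb_def)
          hence "f \<in> \<Union>U" using x by auto
          then obtain u where u: "u \<in> U" "f \<in> u" by auto
          then obtain g where g: "g \<in> S" "u = {g, d g}" using U by (auto simp: Orb_def)
          have "f = g \<or> f = d g" using u g by auto
          hence "x = u" using f g dd by auto
          thus "x \<in> U" using u by simp
        qed
      qed
    qed
    show "(\<lambda>T. {x\<in>Orb. x \<subseteq> T}) ` TT \<subseteq> Pow Orb" by auto
    show "Union ` Pow Orb \<subseteq> TT"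
    proof
      fix T assume "T \<in> Union ` Pow Orb"
      then obtain U where U: "U \<subseteq> Orb" "T = \<Union>U" by auto
      have "T \<subseteq> S" using U orb by auto
      moreover have "\<forall>f\<in>T. d f \<in> T"
      proof
        fix f assume "f \<in> T"
        then obtain u where u: "u \<in> U" "f \<in> u" using U by auto
        then obtain g where g: "g \<in> S" "u = {g, d g}" using U by (auto simp: Orb_def)
        have "f = g \<or> f = d g" using u g by auto
        hence "d f \<in> u" using g dd by auto
        thus "d f \<in> T" using u U by auto
      qed
      ultimately show "T \<in> TT" by (simp add: TT_def)
    qed
  qed
  have "card TT = card (Pow Orb)" using bij by (rule bij_betw_same_card)
  also have "\<dots> = 2 ^ card Orb" using finOrb by (rule card_Pow)
  finally show ?thesis using cOrb by (simp add: TT_def Om_def La_def)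
qed


context
  fixes q :: nat
  assumes q_pos: "q > 0"
    and add_pow: "\<And>a b :: 'a::{field,finite}. (a + b) ^ q = a ^ q + b ^ q"
    and invol: "\<And>a :: 'a. (a ^ q) ^ q = a"
begin

interpretation fr: frob q using q_pos add_pow invol by unfold_locales auto

interpretation fp:
  normalization_euclidean_semiring_multiplicative where zero = "0 :: 'a poly"
    and one = 1 and plus = plus and minus = minus
    and times = times
    and normalize = "\<lambda>p. smult (inverse (lead_coeff p)) p"
    and unit_factor = "\<lambda>p. [:lead_coeff p:]"
    and euclidean_size = "\<lambda>p. if p = 0 then 0 else 2 ^ degree p"
    and divide = divide and modulo = modulo
  rewrites "dvd.dvd (times :: 'a poly \<Rightarrow> _) = Rings.dvd"
    and "comm_monoid_mult.prod_mset times 1 = prod_mset"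
    and "comm_semiring_1.irreducible times 1 0 = irreducible"
    and "comm_semiring_1.prime_elem times 1 0 = prime_elem"
proof -
  show "dvd.dvd (times :: 'a poly \<Rightarrow> _) = Rings.dvd"
    by (simp add: dvd_dict)
  show "comm_monoid_mult.prod_mset times 1 = prod_mset"
    by (simp add: prod_mset_dict)
  show "comm_semiring_1.irreducible times 1 0 = irreducible"
    by (simp add: irreducible_dict)
  show "comm_semiring_1.prime_elem times 1 0 = prime_elem"
    by (simp add: prime_elem_dict)
  show "class.normalization_euclidean_semiring_multiplicative divide plus minus (0 :: 'a poly) times 1
    modulo (\<lambda>p. if p = 0 then 0 else 2 ^ degree p)
    (\<lambda>p. [:lead_coeff p:]) (\<lambda>p. smult (inverse (lead_coeff p)) p)"
  proof (standard, fold dvd_dict)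
    fix p :: "'a poly"
    show "[:lead_coeff p:] * smult (inverse (lead_coeff p)) p = p"
      by (cases "p = 0") simp_all
  next
    fix p :: "'a poly" assume "is_unit p"
    then show "[:lead_coeff p:] = p"
      by (elim is_unit_polyE) (auto simp: monom_0 one_poly_def field_simps)
  next
    fix p :: "'a poly" assume "p \<noteq> 0"
    then show "is_unit [:lead_coeff p:]"
      by (simp add: is_unit_pCons_iff)
  next
    fix a b :: "'a poly" assume "is_unit a"
    thus "[:lead_coeff (a * b):] = a * [:lead_coeff b:]"
      by (auto elim!: is_unit_polyE)
  qed (auto simp: lead_coeff_mult Rings.div_mult_mod_eq intro!: degree_mod_less' degree_mult_right_le)
qed


abbreviation sg' :: "'a \<Rightarrow> 'a" where "sg' \<equiv> conjq q"

lemma monic_fp_prime: "lead_coeff f = 1 \<Longrightarrow> irreducible f \<Longrightarrow> fp.prime (f :: 'a poly)"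
  unfolding fp.prime_def using fp.irreducible_imp_prime_elem by simp

lemma fp_prime_monic: assumes "fp.prime (f :: 'a poly)" shows "lead_coeff f = 1"
proof -
  have nz: "f \<noteq> 0" using assms unfolding fp.prime_def by auto
  have "smult (inverse (lead_coeff f)) f = f" using assms unfolding fp.prime_def by simp
  hence "coeff (smult (inverse (lead_coeff f)) f) (degree f) = lead_coeff f" by simp
  hence "inverse (lead_coeff f) * lead_coeff f = lead_coeff f" by simp
  thus ?thesis using nz by (simp add: field_simps)
qed

lemma fp_prime_irred: "fp.prime (f :: 'a poly) \<Longrightarrow> irreducible f"
  unfolding fp.prime_def by (simp add: prime_elem_imp_irreducible)

lemma rv_XX: "m > 0 \<Longrightarrow> fr.rv m (XX m :: 'a poly) = - XX m"
  by (intro poly_eqI) (auto simp: fr.coeff_rv coeff_monom fr.sg_uminus)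

lemma dagger_rv:
  assumes "coeff f 0 \<noteq> 0"
  shows "fr.rv (degree f) f = smult (inverse (sg' (inverse (coeff f 0)))) (dagger_poly q (f :: 'a poly))"
  using assms by (simp add: fr.dagger_eq)

lemma mult_rv_dagger:
  assumes f0: "coeff f 0 \<noteq> 0"
  shows "fp.multiplicity f (fr.rv (degree h) h) = fp.multiplicity (dagger_poly q (f :: 'a poly)) h"
proof -
  define c where "c = inverse (sg' (inverse (coeff f 0)))"
  have c: "c \<noteq> 0" using f0 by (simp add: c_def)
  have fnz: "f \<noteq> 0" using f0 by auto
  have "f ^ k dvd fr.rv (degree h) h \<longleftrightarrow> dagger_poly q f ^ k dvd h" for k
  proof -
    have "coeff (f ^ k) 0 \<noteq> 0" using f0 by (simp add: coeff_0_power)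
    hence "f ^ k dvd fr.rv (degree h) h \<longleftrightarrow> fr.rv (degree (f ^ k)) (f ^ k) dvd h"
      by (intro fr.rv_dvd_iff) simp
    also have "fr.rv (degree (f ^ k)) (f ^ k) = fr.rv (degree f) f ^ k"
      using fnz by (simp add: degree_power_eq fr.rv_power)
    also have "\<dots> = smult (c ^ k) (dagger_poly q f ^ k)"
      using dagger_rv[OF f0] by (simp add: c_def smult_power)
    finally show ?thesis using c by (simp add: smult_dvd_iff)
  qed
  moreover have pw: "\<And>(p :: 'a poly) k. power.power 1 (*) p k = p ^ k"
    by (induct_tac k) (simp_all add: power.power.simps)
  ultimately show ?thesis unfolding fp.multiplicity_def pw by simp
qed

lemma dagger_basic:
  assumes mon: "lead_coeff f = 1" and f0: "coeff f 0 \<noteq> 0"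
  shows "lead_coeff (dagger_poly q f) = 1" "coeff (dagger_poly q f) 0 \<noteq> 0"
    "degree (dagger_poly q f) = degree f"
    "fr.rv (degree f) (dagger_poly q (f :: 'a poly)) = smult (sg' (sg' (inverse (coeff f 0)))) f"
proof -
  define c where "c = sg' (inverse (coeff f 0))"
  have c: "c \<noteq> 0" using f0 by (simp add: c_def)
  have D: "dagger_poly q f = smult c (fr.rv (degree f) f)" by (simp add: fr.dagger_eq c_def)
  have dF: "degree (fr.rv (degree f) f) = degree f" using f0 by (rule fr.degree_rv_eq)
  show dD: "degree (dagger_poly q f) = degree f" using D dF c by simp
  show "lead_coeff (dagger_poly q f) = 1"
    using D dF c f0 by (simp add: fr.coeff_rv c_def fr.sg_inverse)
  show "coeff (dagger_poly q f) 0 \<noteq> 0"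
    using D c mon by (simp add: fr.coeff_rv)
  show "fr.rv (degree f) (dagger_poly q f) = smult (sg' (sg' (inverse (coeff f 0)))) f"
    using D by (simp add: fr.rv_smult fr.rv_rv c_def)
qed

lemma dagger_dagger:
  assumes mon: "lead_coeff f = 1" and f0: "coeff f 0 \<noteq> 0"
  shows "dagger_poly q (dagger_poly q f) = (f :: 'a poly)"
proof -
  note b = dagger_basic[OF mon f0]
  define c where "c = sg' (inverse (coeff f 0))"
  have c: "c \<noteq> 0" using f0 by (simp add: c_def)
  have "coeff (dagger_poly q f) 0 = c * sg' (lead_coeff f)"
    by (simp add: fr.dagger_eq fr.coeff_rv c_def)
  hence d0: "coeff (dagger_poly q f) 0 = c" using mon by simp
  have "dagger_poly q (dagger_poly q f) =
        smult (sg' (inverse c)) (fr.rv (degree f) (dagger_poly q f))"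
    using b(3) d0 by (simp add: fr.dagger_eq)
  also have "\<dots> = smult (sg' (inverse c) * sg' c) f" using b(4) by (simp add: c_def)
  also have "sg' (inverse c) * sg' c = 1" using c by (simp add: fr.sg_mult[symmetric])
  finally show ?thesis by simp
qed

lemma dagger_irred:
  assumes mon: "lead_coeff f = 1" and f0: "coeff f 0 \<noteq> 0" and irr: "irreducible f"
  shows "irreducible (dagger_poly q (f :: 'a poly))"
proof -
  note b = dagger_basic[OF mon f0]
  define G where "G = dagger_poly q f"
  define c where "c = sg' (sg' (inverse (coeff f 0)))"
  have c: "c \<noteq> 0" using f0 by (simp add: c_def)
  have fnz: "f \<noteq> 0" using mon by auto
  have fnu: "\<not> is_unit f" using irr by (simp add: irreducible_def)
  have df: "degree f > 0" using fnz fnu is_unit_iff_degree by blast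
  have Gnz: "G \<noteq> 0" using b(1) by (auto simp: G_def)
  show ?thesis unfolding G_def[symmetric]
  proof (rule irreducibleI)
    show "G \<noteq> 0" by fact
    show "\<not> is_unit G" using is_unit_iff_degree[OF Gnz] b(3) df by (simp add: G_def)
    fix a b assume ab: "G = a * b"
    have anz: "a \<noteq> 0" "b \<noteq> 0" using ab Gnz by auto
    have "coeff a 0 * coeff b 0 \<noteq> 0" using ab b(2) by (simp add: G_def coeff_mult)
    hence a0: "coeff a 0 \<noteq> 0" "coeff b 0 \<noteq> 0" by auto
    have dab: "degree a + degree b = degree f" using ab anz b(3) by (simp add: G_def degree_mult_eq)
    have "smult c f = fr.rv (degree a + degree b) (a * b)" using b(4) ab dab by (simp add: G_def c_def)
    also have "\<dots> = fr.rv (degree a) a * fr.rv (degree b) b" by (intro fr.rv_mult) auto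
    finally have "f = smult (inverse c) (fr.rv (degree a) a) * fr.rv (degree b) b"
      using c by (metis mult_smult_left smult_smult field_class.field_inverse mult.commute smult_1_left)
    hence "is_unit (smult (inverse c) (fr.rv (degree a) a)) \<or> is_unit (fr.rv (degree b) b)"
      using irr irreducibleD by blast
    moreover have "fr.rv (degree a) a \<noteq> 0" "fr.rv (degree b) b \<noteq> 0"
      using fr.degree_rv_eq a0 fr.coeff_rv_top by (metis fr.sg_eq0 leading_coeff_0_iff)+
    ultimately have "degree (fr.rv (degree a) a) = 0 \<or> degree (fr.rv (degree b) b) = 0"
      using c is_unit_iff_degree by (metis degree_smult_eq inverse_eq_imp_eq inverse_zero smult_eq_0_iff)
    hence "degree a = 0 \<or> degree b = 0" using fr.degree_rv_eq a0 by metis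
    thus "is_unit a \<or> is_unit b" using anz is_unit_iff_degree by blast
  qed
qed

lemma dagger_dvd_XX:
  assumes m: "m > 0" and mon: "lead_coeff f = 1" and f0: "coeff f 0 \<noteq> 0" and d: "f dvd (XX m :: 'a poly)"
  shows "dagger_poly q f dvd XX m"
proof -
  obtain k where k: "XX m = f * k" using d by (auto elim: dvdE)
  have fnz: "f \<noteq> 0" using mon by auto
  have knz: "k \<noteq> 0" using k XX_nz[OF m, where ?'a='a] by auto
  have dk: "degree k = m - degree f" using k fnz knz degree_XX[OF m, where ?'a='a]
    by (metis add_diff_cancel_left' degree_mult_eq)
  have dfm: "degree f \<le> m" using k fnz knz degree_XX[OF m, where ?'a='a]
    by (metis degree_mult_eq le_add1)
  have "- XX m = fr.rv (degree f + (m - degree f)) (f * k)" using rv_XX[OF m] k dfm by simp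
  also have "\<dots> = fr.rv (degree f) f * fr.rv (m - degree f) k" using dk by (intro fr.rv_mult) auto
  finally have "fr.rv (degree f) f dvd XX m" by (metis dvd_minus_iff dvd_triv_left)
  thus ?thesis using fr.dagger_eq[of f] f0 by (simp add: smult_dvd_iff)
qed

lemma mif_dagger:
  assumes "m > 0" "mon_irr_factor m f"
  shows "mon_irr_factor m (dagger_poly q (f :: 'a poly))"
  using assms dagger_basic dagger_irred dagger_dvd_XX unfolding mon_irr_factor_def by auto


lemma pw_fun: "power.power (1::'a poly) (*) = (^)"
proof (intro ext)
  fix p :: "'a poly" and k :: nat
  show "power.power 1 (*) p k = p ^ k" by (induct k) (simp_all add: power.power.simps)
qed

lemma pr_fun: "comm_monoid_mult.prod (*) (1::'a poly) = prod"
  by (simp add: prod_dict)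

lemma S_prime: "mon_irr_factor m f \<Longrightarrow> fp.prime (f :: 'a poly)"
  unfolding mon_irr_factor_def by (intro monic_fp_prime) auto

lemma coeff0_of_dvd_XX:
  assumes "m > 0" "(f :: 'a poly) dvd XX m" shows "coeff f 0 \<noteq> 0"
proof
  assume f0: "coeff f 0 = 0"
  obtain k where "XX m = f * k" using assms by (auto elim: dvdE)
  hence "coeff (XX m :: 'a poly) 0 = coeff f 0 * coeff k 0" by (simp add: coeff_mult)
  thus False using f0 fr.coeff_XX_0[OF assms(1)] by simp
qed

lemma S_char:
  assumes "n' > 0" "fp.prime f"
  shows "mon_irr_factor n' f \<longleftrightarrow> (f :: 'a poly) dvd XX n'"
  using assms fp_prime_monic fp_prime_irred coeff0_of_dvd_XX unfolding mon_irr_factor_def by blast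

lemma prime_elem_of_fp: "fp.prime (f :: 'a poly) \<Longrightarrow> prime_elem f"
  unfolding fp.prime_def by simp

lemma fp_prime_nz: "fp.prime (f :: 'a poly) \<Longrightarrow> f \<noteq> 0"
  unfolding fp.prime_def by auto

lemma fp_prime_nu: "fp.prime (f :: 'a poly) \<Longrightarrow> \<not> is_unit f"
  unfolding fp.prime_def by (auto simp: prime_elem_def)

lemma mult_X:
  assumes n': "n' > 0" and XY: "XX n = (XX n' :: 'a poly) ^ e"
    and sqf: "\<And>f. fp.prime f \<Longrightarrow> \<not> f ^ 2 dvd (XX n' :: 'a poly)" and r: "fp.prime r"
  shows "fp.multiplicity r (XX n :: 'a poly) = (if mon_irr_factor n' r then e else 0)"
proof -
  have "fp.multiplicity r (XX n' :: 'a poly) = (if mon_irr_factor n' r then 1 else 0)"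
  proof (cases "mon_irr_factor n' r")
    case True
    hence "r ^ 1 dvd XX n'" using S_char[OF n' r] by simp
    moreover have "\<not> r ^ Suc 1 dvd XX n'" using sqf[OF r] by (simp add: numeral_2_eq_2)
    ultimately show ?thesis using True fp.multiplicity_eqI[unfolded pw_fun] by simp
  next
    case False
    hence "\<not> r dvd XX n'" using S_char[OF n' r] by simp
    thus ?thesis using False fp.not_dvd_imp_multiplicity_0 by simp
  qed
  thus ?thesis using XY fp.prime_elem_multiplicity_power_distrib[OF prime_elem_of_fp[OF r] XX_nz[OF n'], unfolded pw_fun]
    by simp
qed

lemma hcd_Pcond:
  assumes n': "n' > 0" and e0: "e > 0" and n: "n > 0" and XY: "XX n = (XX n' :: 'a poly) ^ e"
    and sqf: "\<And>f. fp.prime f \<Longrightarrow> \<not> f ^ 2 dvd (XX n' :: 'a poly)"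
    and mon: "lead_coeff g = 1" and g: "g dvd (XX n :: 'a poly)"
  shows "is_HCD q n (code_of n g) \<longleftrightarrow>
    (\<forall>f. mon_irr_factor n' f \<longrightarrow> fp.multiplicity f g = e \<or> fp.multiplicity (dagger_poly q f) g = 0)"
proof -
  define X where "X = (XX n :: 'a poly)"
  define h where "h = X div g"
  define H where "H = fr.rv (degree h) h"
  have Xnz: "X \<noteq> 0" using XX_nz[OF n] by (simp add: X_def)
  have dX: "degree X = n" using degree_XX[OF n] by (simp add: X_def)
  have Xgh: "X = g * h" using g by (simp add: h_def X_def)
  have gnz: "g \<noteq> 0" and hnz: "h \<noteq> 0" using Xgh Xnz by auto
  have h0: "coeff h 0 \<noteq> 0" using coeff0_of_dvd_XX[OF n, of h] Xgh by (simp add: X_def)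
  have hX: "h dvd X" using Xgh by simp
  have mX: "fp.multiplicity r X = (if mon_irr_factor n' r then e else 0)" if "fp.prime r" for r
    using mult_X[OF n' XY sqf that] by (simp add: X_def)
  have mXgh: "fp.multiplicity r X = fp.multiplicity r g + fp.multiplicity r h" if "fp.prime r" for r
    using fp.prime_elem_multiplicity_mult_distrib[OF prime_elem_of_fp[OF that] gnz hnz] Xgh by simp
  have mH: "fp.multiplicity f H = fp.multiplicity (dagger_poly q f) h" if "mon_irr_factor n' f" for f
    using mult_rv_dagger[of f h] that by (simp add: H_def mon_irr_factor_def)
  have HX: "H dvd X"
  proof -
    have "fr.rv n X = - X" using rv_XX[OF n] by (simp add: X_def)
    moreover have "n = degree h + degree g" using Xgh dX gnz hnz by (simp add: degree_mult_eq)
    moreover have "X = h * g" using Xgh by simp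
    ultimately have "- X = H * fr.rv (degree g) g" using fr.rv_mult[of h "degree h" g "degree g"]
      by (simp add: H_def)
    thus ?thesis by (metis dvd_minus_iff dvd_triv_left)
  qed
  have Hnz: "H \<noteq> 0"
    using fr.degree_rv_eq[OF h0] fr.coeff_rv_top[of "degree h" h] h0 by (auto simp: H_def)
  have hcd: "is_HCD q n (code_of n g) \<longleftrightarrow> \<not> (\<exists>w. w \<noteq> 0 \<and> degree w < n \<and> g dvd w \<and> H dvd w)"
    using fr.hcd_iff[OF n g] by (simp add: H_def h_def X_def)
  show ?thesis
  proof
    assume HC: "is_HCD q n (code_of n g)"
    show "\<forall>f. mon_irr_factor n' f \<longrightarrow> fp.multiplicity f g = e \<or> fp.multiplicity (dagger_poly q f) g = 0"
    proof (intro allI impI, rule ccontr)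
      fix f assume fS: "mon_irr_factor n' f"
        and nf: "\<not> (fp.multiplicity f g = e \<or> fp.multiplicity (dagger_poly q f) g = 0)"
      have fp: "fp.prime f" using S_prime[OF fS] .
      have dS: "mon_irr_factor n' (dagger_poly q f)" using mif_dagger[OF n' fS] .
      have dp: "fp.prime (dagger_poly q f)" using S_prime[OF dS] .
      have fnz: "f \<noteq> 0" using fp_prime_nz[OF fp] .
      have fnu: "\<not> is_unit f" using fp_prime_nu[OF fp] .
      have "fp.multiplicity f g \<le> fp.multiplicity f X" using fp.dvd_imp_multiplicity_le[OF _ Xnz] g
        by (simp add: X_def)
      hence mfg: "fp.multiplicity f g \<le> e - 1" using nf mX[OF fp] fS by auto
      have fY: "f dvd XX n'" using S_char[OF n' fp] fS by simp
      have fX: "f dvd X" using fY e0 XY unfolding X_def by (metis dvd_power dvd_trans)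
      define w where "w = X div f"
      have Xfw: "X = f * w" using fX by (simp add: w_def)
      have wnz: "w \<noteq> 0" using Xfw Xnz by auto
      have df: "degree f > 0" using fnz fnu is_unit_iff_degree by blast
      have dw: "degree w < n" using Xfw dX fnz wnz df by (simp add: degree_mult_eq)
      have mXfw: "fp.multiplicity r X = fp.multiplicity r f + fp.multiplicity r w" if "fp.prime r" for r
        using fp.prime_elem_multiplicity_mult_distrib[OF prime_elem_of_fp[OF that] fnz wnz] Xfw by simp
      have mrf: "fp.multiplicity r f = (if r = f then 1 else 0)" if "fp.prime r" for r
        using fp.multiplicity_self[OF fnz fnu] fp.prime_multiplicity_other[OF that fp] by auto
      have mfw: "fp.multiplicity f w = e - 1" using mXfw[OF fp] mrf[OF fp] mX[OF fp] fS by simp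
      have gw: "g dvd w"
      proof (rule fp.multiplicity_le_imp_dvd[OF gnz])
        fix r assume r: "fp.prime r"
        show "fp.multiplicity r g \<le> fp.multiplicity r w"
        proof (cases "r = f")
          case True thus ?thesis using mfw mfg by simp
        next
          case False
          have "fp.multiplicity r g \<le> fp.multiplicity r X" using mXgh[OF r] by simp
          thus ?thesis using mXfw[OF r] mrf[OF r] False by simp
        qed
      qed
      have Hw: "H dvd w"
      proof (rule fp.multiplicity_le_imp_dvd[OF Hnz])
        fix r assume r: "fp.prime r"
        show "fp.multiplicity r H \<le> fp.multiplicity r w"
        proof (cases "r = f")
          case True
          have "fp.multiplicity (dagger_poly q f) X = e" using mX[OF dp] dS by simp
          hence "fp.multiplicity (dagger_poly q f) h = e - fp.multiplicity (dagger_poly q f) g"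
            using mXgh[OF dp] by simp
          moreover have "fp.multiplicity (dagger_poly q f) g \<noteq> 0" using nf by simp
          ultimately show ?thesis using True mH[OF fS] mfw by simp
        next
          case False
          have "fp.multiplicity r H \<le> fp.multiplicity r X"
            using fp.dvd_imp_multiplicity_le[OF HX Xnz] .
          thus ?thesis using mXfw[OF r] mrf[OF r] False by simp
        qed
      qed
      show False using hcd HC wnz dw gw Hw by blast
    qed
  next
    assume P: "\<forall>f. mon_irr_factor n' f \<longrightarrow> fp.multiplicity f g = e \<or> fp.multiplicity (dagger_poly q f) g = 0"
    have "\<not> (\<exists>w. w \<noteq> 0 \<and> degree w < n \<and> g dvd w \<and> H dvd w)"
    proof
      assume "\<exists>w. w \<noteq> 0 \<and> degree w < n \<and> g dvd w \<and> H dvd w"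
      then obtain w where w: "w \<noteq> 0" "degree w < n" "g dvd w" "H dvd w" by blast
      have "X dvd w"
      proof (rule fp.multiplicity_le_imp_dvd[OF Xnz])
        fix r assume r: "fp.prime r"
        show "fp.multiplicity r X \<le> fp.multiplicity r w"
        proof (cases "mon_irr_factor n' r")
          case False thus ?thesis using mX[OF r] by simp
        next
          case True
          have gw: "fp.multiplicity r g \<le> fp.multiplicity r w" using fp.dvd_imp_multiplicity_le[OF w(3) w(1)] .
          have Hw: "fp.multiplicity r H \<le> fp.multiplicity r w" using fp.dvd_imp_multiplicity_le[OF w(4) w(1)] .
          have "fp.multiplicity r g = e \<or> fp.multiplicity (dagger_poly q r) g = 0"
            using P[rule_format, OF True] .
          thus ?thesis
          proof
            assume "fp.multiplicity r g = e" thus ?thesis using gw mX[OF r] True by simp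
          next
            assume z: "fp.multiplicity (dagger_poly q r) g = 0"
            have dS: "mon_irr_factor n' (dagger_poly q r)" using mif_dagger[OF n' True] .
            have "fp.multiplicity (dagger_poly q r) h = e"
              using mXgh[OF S_prime[OF dS]] mX[OF S_prime[OF dS]] dS z by simp
            hence "fp.multiplicity r H = e" using mH[OF True] by simp
            thus ?thesis using Hw mX[OF r] True by simp
          qed
        qed
      qed
      hence "degree X \<le> degree w" using w(1) dvd_imp_degree_le by blast
      thus False using dX w(2) by simp
    qed
    thus "is_HCD q n (code_of n g)" using hcd by simp
  qed
qed


lemma count_V:
  assumes n': "n' > 0" and e0: "e > 0" and n: "n > 0" and XY: "XX n = (XX n' :: 'a poly) ^ e"
    and sqf: "\<And>f. fp.prime f \<Longrightarrow> \<not> f ^ 2 dvd (XX n' :: 'a poly)"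
  shows "card {g. lead_coeff g = 1 \<and> g dvd (XX n :: 'a poly) \<and>
           (\<forall>f. mon_irr_factor n' f \<longrightarrow> fp.multiplicity f g = e \<or> fp.multiplicity (dagger_poly q f) g = 0)}
         = 2 ^ (card (Omega q n' :: 'a poly set) + card (Lambda q n' :: 'a poly set set))"
proof -
  define X where "X = (XX n :: 'a poly)"
  define S where "S = {f. mon_irr_factor n' (f :: 'a poly)}"
  define d :: "'a poly \<Rightarrow> 'a poly" where "d = dagger_poly q"
  define P where "P g \<longleftrightarrow> (\<forall>f\<in>S. fp.multiplicity f g = e \<or> fp.multiplicity (d f) g = 0)" for g
  define V where "V = {g. lead_coeff g = 1 \<and> g dvd X \<and> P g}"
  define TT where "TT = {T. T \<subseteq> S \<and> (\<forall>f\<in>T. d f \<in> T)}"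
  define Phi :: "'a poly set \<Rightarrow> 'a poly" where "Phi T = (\<Prod>f\<in>T. f ^ e)" for T
  have Xnz: "X \<noteq> 0" using XX_nz[OF n] by (simp add: X_def)
  have finS: "finite S"
  proof (rule finite_subset)
    show "S \<subseteq> set_mset (fp.prime_factorization (XX n'))"
    proof
      fix f assume "f \<in> S"
      hence "fp.prime f" "f dvd XX n'" using S_prime S_char[OF n'] by (auto simp: S_def)
      thus "f \<in> set_mset (fp.prime_factorization (XX n'))"
        using fp.in_prime_factors_iff XX_nz[OF n'] by blast
    qed
  qed simp
  have SP: "\<And>f. f \<in> S \<Longrightarrow> fp.prime f" using S_prime by (auto simp: S_def)
  have dS: "\<And>f. f \<in> S \<Longrightarrow> d f \<in> S" using mif_dagger[OF n'] by (auto simp: S_def d_def)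
  have dd: "\<And>f. f \<in> S \<Longrightarrow> d (d f) = f"
    using dagger_dagger by (auto simp: S_def d_def mon_irr_factor_def)
  have mX: "fp.multiplicity r X = (if r \<in> S then e else 0)" if "fp.prime r" for r
    using mult_X[OF n' XY sqf that] by (simp add: X_def S_def)
  have mrf: "fp.multiplicity r f = (if r = f then 1 else 0)" if "fp.prime r" "fp.prime f" for r f
    using fp.multiplicity_self[OF fp_prime_nz[OF that(2)] fp_prime_nu[OF that(2)]]
      fp.prime_multiplicity_other[OF that] by auto
  have mPhi: "fp.multiplicity r (Phi T) = (if r \<in> T then e else 0)"
    if T: "T \<subseteq> S" and r: "fp.prime r" for T r
  proof -
    have finT: "finite T" using finS T finite_subset by blast
    have nz0: "0 \<notin> (\<lambda>f. f ^ e) ` T"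
    proof
      assume "0 \<in> (\<lambda>f. f ^ e) ` T"
      then obtain f where "f \<in> T" "f ^ e = 0" by auto
      thus False using T SP[of f] fp_prime_nz[of f] by auto
    qed
    have "fp.multiplicity r (Phi T) = (\<Sum>f\<in>T. fp.multiplicity r (f ^ e))"
      unfolding Phi_def using fp.prime_elem_multiplicity_prod_distrib[OF prime_elem_of_fp[OF r] nz0 finT, unfolded pw_fun pr_fun] .
    also have "\<dots> = (\<Sum>f\<in>T. if r = f then e else 0)"
    proof (intro sum.cong refl)
      fix f assume "f \<in> T"
      hence fpf: "fp.prime f" using T SP by auto
      show "fp.multiplicity r (f ^ e) = (if r = f then e else 0)"
        using fp.prime_elem_multiplicity_power_distrib[OF prime_elem_of_fp[OF r] fp_prime_nz[OF fpf], unfolded pw_fun]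
          mrf[OF r fpf] by simp
    qed
    also have "\<dots> = (if r \<in> T then e else 0)" using finT by (simp add: sum.delta)
    finally show ?thesis .
  qed
  have Phi_nz: "Phi T \<noteq> 0" if "T \<subseteq> S" for T
  proof -
    have "0 \<notin> T" using that SP fp_prime_nz by blast
    thus ?thesis unfolding Phi_def using that by (auto simp: prod_zero_iff finite_subset[OF that finS])
  qed
  have Phi_monic: "lead_coeff (Phi T) = 1" if "T \<subseteq> S" for T
    unfolding Phi_def lead_coeff_prod lead_coeff_power using that SP fp_prime_monic
    by (intro prod.neutral) auto
  have bij: "bij_betw Phi TT V"
  proof (rule bij_betw_imageI)
    show "inj_on Phi TT"
    proof
      fix T1 T2 assume T1: "T1 \<in> TT" and T2: "T2 \<in> TT" and eq: "Phi T1 = Phi T2"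
      show "T1 = T2"
      proof (rule set_eqI)
        fix r
        show "r \<in> T1 \<longleftrightarrow> r \<in> T2"
        proof (cases "r \<in> S")
          case True
          have "fp.multiplicity r (Phi T1) = fp.multiplicity r (Phi T2)" using eq by simp
          thus ?thesis using mPhi[OF _ SP[OF True], of T1] mPhi[OF _ SP[OF True], of T2] T1 T2 e0
            by (auto simp: TT_def split: if_splits)
        next
          case False thus ?thesis using T1 T2 by (auto simp: TT_def)
        qed
      qed
    qed
    show "Phi ` TT = V"
    proof
      show "Phi ` TT \<subseteq> V"
      proof
        fix x assume "x \<in> Phi ` TT"
        then obtain T where T: "T \<in> TT" "x = Phi T" by auto
        have TS: "T \<subseteq> S" using T by (simp add: TT_def)
        have "x dvd X"
        proof (rule fp.multiplicity_le_imp_dvd)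
          show "x \<noteq> 0" using Phi_nz[OF TS] T by simp
          fix r assume r: "fp.prime r"
          show "fp.multiplicity r x \<le> fp.multiplicity r X"
            using mPhi[OF TS r] mX[OF r] TS T by auto
        qed
        moreover have "P x"
          unfolding P_def
        proof
          fix f assume fS: "f \<in> S"
          show "fp.multiplicity f x = e \<or> fp.multiplicity (d f) x = 0"
          proof (cases "f \<in> T")
            case True thus ?thesis using mPhi[OF TS SP[OF fS]] T by simp
          next
            case False
            have "d f \<notin> T" using T False dd[OF fS] by (auto simp: TT_def)
            thus ?thesis using mPhi[OF TS SP[OF dS[OF fS]]] T by simp
          qed
        qed
        ultimately show "x \<in> V" using Phi_monic[OF TS] T by (simp add: V_def)
      qed
    next
      show "V \<subseteq> Phi ` TT"
      proof
        fix g assume g: "g \<in> V"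
        hence mon: "lead_coeff g = 1" and gX: "g dvd X" and Pg: "P g" by (auto simp: V_def)
        have gnz: "g \<noteq> 0" using mon by auto
        define T where "T = {f\<in>S. fp.multiplicity f g = e}"
        have TS: "T \<subseteq> S" by (auto simp: T_def)
        have mg: "fp.multiplicity r g = (if r \<in> T then e else 0)" if r: "fp.prime r" for r
        proof (cases "r \<in> S")
          case False
          have "fp.multiplicity r g \<le> fp.multiplicity r X" using fp.dvd_imp_multiplicity_le[OF gX Xnz] .
          thus ?thesis using mX[OF r] False by (simp add: T_def)
        next
          case True
          show ?thesis
          proof (cases "fp.multiplicity r g = e")
            case True' : True
            thus ?thesis using True by (simp add: T_def)
          next
            case False
            have "fp.multiplicity (d r) g = 0" using Pg True False by (auto simp: P_def)
            moreover have "fp.multiplicity (d r) g = e \<or> fp.multiplicity (d (d r)) g = 0"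
              using Pg dS[OF True] by (auto simp: P_def)
            ultimately have "fp.multiplicity r g = 0" using e0 dd[OF True] by auto
            thus ?thesis using False by (simp add: T_def)
          qed
        qed
        have "T \<in> TT"
        proof -
          have "\<forall>f\<in>T. d f \<in> T"
          proof
            fix f assume fT: "f \<in> T"
            hence fS: "f \<in> S" and mf: "fp.multiplicity f g = e" by (auto simp: T_def)
            have "fp.multiplicity (d f) g = e \<or> fp.multiplicity (d (d f)) g = 0"
              using Pg dS[OF fS] by (auto simp: P_def)
            hence "fp.multiplicity (d f) g = e" using mf e0 dd[OF fS] by auto
            thus "d f \<in> T" using dS[OF fS] by (simp add: T_def)
          qed
          thus ?thesis using TS by (simp add: TT_def)
        qed
        moreover have "g = Phi T"
        proof -
          have "smult (inverse (lead_coeff g)) g = smult (inverse (lead_coeff (Phi T))) (Phi T)"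
          proof (rule fp.multiplicity_eq_imp_eq[OF gnz Phi_nz[OF TS]])
            fix r assume r: "fp.prime r"
            show "fp.multiplicity r g = fp.multiplicity r (Phi T)" using mg[OF r] mPhi[OF TS r] by simp
          qed
          thus ?thesis using mon Phi_monic[OF TS] by simp
        qed
        ultimately show "g \<in> Phi ` TT" by blast
      qed
    qed
  qed
  have "card V = card TT" using bij_betw_same_card[OF bij] by simp
  also have "card TT = 2 ^ (card {f. f \<in> S \<and> f = d f} + card {{f, d f} | f. f \<in> S \<and> d f \<in> S \<and> f \<noteq> d f})"
    unfolding TT_def by (rule orbit_count[OF finS dS dd])
  also have "{f. f \<in> S \<and> f = d f} = Omega q n'" by (simp add: Omega_def S_def d_def)
  also have "{{f, d f} | f. f \<in> S \<and> d f \<in> S \<and> f \<noteq> d f} = Lambda q n'" by (simp add: Lambda_def S_def d_def)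
  finally show ?thesis by (simp add: V_def P_def S_def X_def d_def)
qed


lemma sqf_lemma:
  assumes n': "n' > 0" and ch: "of_nat n' \<noteq> (0::'a)" and f: "fp.prime (f :: 'a poly)"
  shows "\<not> f ^ 2 dvd XX n'"
proof
  assume "f ^ 2 dvd XX n'"
  then obtain k where k0: "XX n' = f ^ 2 * k" by (auto elim: dvdE)
  hence k: "XX n' = f * (f * k)" by (simp add: power2_eq_square mult.assoc)
  have "pderiv (XX n' :: 'a poly) = f * pderiv (f * k) + (f * k) * pderiv f"
    using k by (simp add: pderiv_mult)
  hence d1: "f dvd pderiv (XX n' :: 'a poly)" by (simp add: dvd_add dvd_mult2)
  have "pderiv (XX n' :: 'a poly) = smult (of_nat n') (monom 1 (n' - 1))"
    by (simp add: pderiv_diff pderiv_monom smult_monom)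
  hence "f dvd monom 1 (n' - 1)" using d1 ch by (simp add: dvd_smult_cancel)
  hence "f dvd monom 1 1 * monom 1 (n' - 1)" by (simp add: dvd_mult)
  hence "f dvd monom 1 n'" using n' by (simp add: mult_monom)
  moreover have "f dvd XX n'" using k by simp
  ultimately have "f dvd monom 1 n' - XX n'" by (rule dvd_diff)
  hence "f dvd 1" by simp
  thus False using fp_prime_nu[OF f] by simp
qed

lemma main_in_ctx:
  assumes n': "n' > 0" and e0: "e > 0" and n: "n > 0" and XY: "XX n = (XX n' :: 'a poly) ^ e"
    and ch: "of_nat n' \<noteq> (0::'a)"
  shows "card {C :: 'a list set. is_cyclic_code n C \<and> is_HCD q n C}
         = 2 ^ (card (Omega q n' :: 'a poly set) + card (Lambda q n' :: 'a poly set set))"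
proof -
  have sqf: "\<And>f. fp.prime f \<Longrightarrow> \<not> f ^ 2 dvd (XX n' :: 'a poly)" using sqf_lemma[OF n' ch] by blast
  define V where "V = {g. lead_coeff g = 1 \<and> g dvd (XX n :: 'a poly) \<and> is_HCD q n (code_of n g)}"
  have eqC: "{C :: 'a list set. is_cyclic_code n C \<and> is_HCD q n C} = code_of n ` V"
  proof
    show "{C. is_cyclic_code n C \<and> is_HCD q n C} \<subseteq> code_of n ` V"
    proof
      fix C assume C: "C \<in> {C :: 'a list set. is_cyclic_code n C \<and> is_HCD q n C}"
      then obtain g where g: "lead_coeff g = 1" "g dvd XX n" "C = code_of n g"
        using cyclic_code_gen[OF n] by blast
      thus "C \<in> code_of n ` V" using C unfolding V_def by blast
    qed
    show "code_of n ` V \<subseteq> {C. is_cyclic_code n C \<and> is_HCD q n C}"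
    proof
      fix C assume "C \<in> code_of n ` V"
      then obtain g where g: "g \<in> V" "C = code_of n g" by blast
      hence "g dvd XX n" "is_HCD q n (code_of n g)" by (auto simp: V_def)
      thus "C \<in> {C. is_cyclic_code n C \<and> is_HCD q n C}" using code_cyclic[OF n] g by blast
    qed
  qed
  have inj: "inj_on (code_of n) V"
  proof (rule inj_onI)
    fix g h assume "g \<in> V" "h \<in> V" "code_of n g = code_of n h"
    thus "g = h" using code_of_inj[OF n, of g h] by (simp add: V_def)
  qed
  have "V = {g. lead_coeff g = 1 \<and> g dvd (XX n :: 'a poly) \<and>
           (\<forall>f. mon_irr_factor n' f \<longrightarrow> fp.multiplicity f g = e \<or> fp.multiplicity (dagger_poly q f) g = 0)}"
    unfolding V_def
  proof (rule Collect_cong)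
    fix g :: "'a poly"
    show "(lead_coeff g = 1 \<and> g dvd XX n \<and> is_HCD q n (code_of n g)) \<longleftrightarrow>
          (lead_coeff g = 1 \<and> g dvd XX n \<and>
           (\<forall>f. mon_irr_factor n' f \<longrightarrow> fp.multiplicity f g = e \<or> fp.multiplicity (dagger_poly q f) g = 0))"
    proof (intro conj_cong refl)
      assume a1: "lead_coeff g = 1" and a2: "g dvd XX n"
      show "is_HCD q n (code_of n g) \<longleftrightarrow>
           (\<forall>f. mon_irr_factor n' f \<longrightarrow> fp.multiplicity f g = e \<or> fp.multiplicity (dagger_poly q f) g = 0)"
        using hcd_Pcond[OF n' e0 n XY sqf a1 a2] .
    qed
  qed
  hence "card V = 2 ^ (card (Omega q n' :: 'a poly set) + card (Lambda q n' :: 'a poly set set))"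
    using count_V[OF n' e0 n XY sqf] by simp
  moreover have "card (code_of n ` V) = card V" by (rule card_image[OF inj])
  ultimately show ?thesis unfolding eqC by simp
qed

end


lemma finite_field_pow_card:
  fixes x :: "'a :: {field, finite}"
  shows "x ^ card (UNIV :: 'a set) = x"
proof (cases "x = 0")
  case False
  have "x * (\<Prod>y\<in>UNIV-{0}. x * y) = x * x ^ (card (UNIV :: 'a set) - 1) * \<Prod>(UNIV-{0})"
    by (simp add: prod.distrib mult_ac)
  also have "x * x ^ (card (UNIV :: 'a set) - 1) = x ^ Suc (card (UNIV :: 'a set) - 1)"
    by (subst power_Suc) auto
  also have "Suc (card (UNIV :: 'a set) - 1) = card (UNIV :: 'a set)"
    using finite_UNIV_card_ge_0[where ?'a = 'a] by simp
  also have "(\<Prod>y\<in>UNIV-{0}. x * y) = (\<Prod>y\<in>UNIV-{0}. y)"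
    by (rule prod.reindex_bij_witness[of _ "\<lambda>y. y / x" "\<lambda>y. x * y"]) (use False in auto)
  finally show ?thesis
    by simp
qed (use finite_UNIV_card_ge_0[where ?'a = 'a] in auto)

lemma of_nat_card_zero: "of_nat (card (UNIV :: 'a::{field,finite} set)) = (0 :: 'a)"
proof -
  have "(\<Sum>a\<in>(UNIV :: 'a set). a + 1) = (\<Sum>a\<in>(UNIV :: 'a set). a)"
    by (rule sum.reindex_bij_witness[of _ "\<lambda>a. a - 1" "\<lambda>a. a + 1"]) auto
  moreover have "(\<Sum>a\<in>(UNIV :: 'a set). a + 1) = (\<Sum>a\<in>(UNIV :: 'a set). a) + of_nat (card (UNIV :: 'a set))"
    by (simp add: sum.distrib)
  ultimately show ?thesis by simp
qed

theorem corollary3p4: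
  fixes p q m \<nu> n' :: nat
  assumes "prime p" and "m \<ge> 1" and "q = p ^ m"
    and "card (UNIV :: ('a::{field,finite}) set) = q ^ 2"
    and "n' > 0" and "\<not> p dvd n'"
  shows "card {C :: 'a list set. is_cyclic_code (p ^ \<nu> * n') C \<and> is_HCD q (p ^ \<nu> * n') C}
         = 2 ^ (card (Omega q n' :: 'a poly set) + card (Lambda q n' :: 'a poly set set))"
proof -
  note pp = assms(1) and qdef = assms(3) and card = assms(4) and n' = assms(5) and ndvd = assms(6)
  have chpos: "CHAR('a) > 0" by (rule finite_imp_CHAR_pos) simp
  have chprime: "prime CHAR('a)" by (rule prime_CHAR_semidom[OF chpos])
  have "CHAR('a) dvd card (UNIV :: 'a set)"
    using of_nat_card_zero[where ?'a='a] by (simp add: of_nat_eq_0_iff_char_dvd)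
  hence "CHAR('a) dvd p ^ (m * 2)" using card qdef by (simp add: power_mult)
  hence "CHAR('a) dvd p" using prime_dvd_power[OF chprime] by blast
  hence chp: "CHAR('a) = p" using primes_dvd_imp_eq[OF chprime pp] by blast
  have q_pos: "q > 0" using qdef pp prime_gt_0_nat by simp
  have add_pow: "\<And>a b :: 'a. (a + b) ^ q = a ^ q + b ^ q"
    using freshmans_dream'[OF chprime, of q m] qdef chp by simp
  have invol: "\<And>a :: 'a. (a ^ q) ^ q = a"
  proof -
    fix a :: 'a
    have "(a ^ q) ^ q = a ^ (q ^ 2)" by (simp add: power_mult[symmetric] power2_eq_square)
    also have "\<dots> = a" using finite_field_pow_card[of a] card by simp
    finally show "(a ^ q) ^ q = a" .
  qed
  define e where "e = p ^ \<nu>"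
  have e0: "e > 0" using pp prime_gt_0_nat by (simp add: e_def)
  have n0: "p ^ \<nu> * n' > 0" using e0 n' by (simp add: e_def)
  have chpoly: "prime CHAR('a poly)" using chprime by simp
  have fd: "\<And>x y :: 'a poly. (x + y) ^ e = x ^ e + y ^ e"
    using freshmans_dream'[OF chpoly, of e \<nu>] chp by (simp add: e_def)
  have m1: "(-1 :: 'a poly) ^ e = -1"
  proof -
    have "(1 + (-1 :: 'a poly)) ^ e = 1 ^ e + (-1) ^ e" by (rule fd)
    moreover have "(1 + (-1 :: 'a poly)) ^ e = 0" using e0 by simp
    ultimately have "1 + (-1 :: 'a poly) ^ e = 0" by simp
    thus ?thesis by (simp add: eq_neg_iff_add_eq_0 add.commute)
  qed
  have XY: "XX (p ^ \<nu> * n') = (XX n' :: 'a poly) ^ e"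
  proof -
    have "(XX n' :: 'a poly) ^ e = (monom 1 n' + (-1)) ^ e" by simp
    also have "\<dots> = monom 1 n' ^ e + (-1) ^ e" by (rule fd)
    also have "\<dots> = monom 1 (p ^ \<nu> * n') - 1" using m1 by (simp add: monom_power e_def mult.commute)
    finally show ?thesis by simp
  qed
  have ch: "of_nat n' \<noteq> (0 :: 'a)" using ndvd chp by (simp add: of_nat_eq_0_iff_char_dvd)
  show ?thesis
    using main_in_ctx[OF q_pos add_pow invol n' e0 n0 XY ch] .
qed


end
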